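(* Let $p>1$, $0<\sigma<1/p$, and let $f$ be a differentiable function on $\mathbb{R}\setminus\{0\}$ such that for some constants $C>0$ and $\delta>1$ $$|f(\lambda)|\le\begin{cases}C|\lambda|^{-\sigma},&|\lambda|\le1,\\ C|\lambda|^{-\delta},&|\lambda|>1,\end{cases}\qquad |f'(\lambda)|\le\begin{cases}C|\lambda|^{-\sigma-1},&|\lambda|\le1,\\ C|\lambda|^{-\delta-1},&|\lambda|>1.\end{cases}$$ Then $f\in\mathrm{Lip}(\mathbb{R};p,1/p-\sigma)$.
   Context: For $\psi\in L^p(\mathbb{R})$, $1\le p\le\infty$, $\omega_p(\psi,\delta):=\sup_{0<h\le\delta}\|\psi(\cdot+h)-\psi(\cdot)\|_p$, and for $0<\gamma\le1$, $\mathrm{Lip}(\mathbb{R};p,\gamma):=\{\psi\in L^p(\mathbb{R}):\omega_p(\psi,\delta)=O(\delta^\gamma)\text{ as }\delta\to0\}$. *)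

theory Defs
  imports "HOL-Analysis.Analysis" "HOL-Library.Landau_Symbols"
begin

definition in_Lp :: "real \<Rightarrow> (real \<Rightarrow> complex) \<Rightarrow> bool" where
  "in_Lp p \<psi> \<longleftrightarrow> \<psi> \<in> borel_measurable lebesgue \<and>
     integrable lebesgue (\<lambda>x. norm (\<psi> x) powr p)"

definition Lp_norm :: "real \<Rightarrow> (real \<Rightarrow> complex) \<Rightarrow> real" where
  "Lp_norm p \<psi> = (LINT x|lebesgue. norm (\<psi> x) powr p) powr (1 / p)"

definition omega_p :: "real \<Rightarrow> (real \<Rightarrow> complex) \<Rightarrow> real \<Rightarrow> real" where
  "omega_p p \<psi> \<delta> = (SUP h\<in>{0<..\<delta>}. Lp_norm p (\<lambda>x. \<psi> (x + h) - \<psi> x))"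

definition Lip_class :: "real \<Rightarrow> real \<Rightarrow> (real \<Rightarrow> complex) set" where
  "Lip_class p \<gamma> = {\<psi>. in_Lp p \<psi> \<and> omega_p p \<psi> \<in> O[at_right 0](\<lambda>\<delta>. \<delta> powr \<gamma>)}"

end

theory Submission
  imports Defs
begin

definition Qf :: "real \<Rightarrow> real \<Rightarrow> real \<Rightarrow> real" where
  "Qf a c s = (if \<bar>s\<bar> \<le> c then \<bar>s\<bar> powr (-a) else 0)"
definition Rf :: "real \<Rightarrow> real \<Rightarrow> real \<Rightarrow> real" where
  "Rf b c s = (if \<bar>s\<bar> > c then \<bar>s\<bar> powr (-b) else 0)"
definition Hf :: "real \<Rightarrow> real \<Rightarrow> real \<Rightarrow> real \<Rightarrow> real" where
  "Hf \<sigma> p C t = 2 powr p * C powr p * Qf (\<sigma>*p) 3 (1+t) + 2 powr p * C powr p * Qf (\<sigma>*p) 3 t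
     + (C * 2 powr (\<sigma>+1)) powr p * Rf ((\<sigma>+1)*p) 2 t"

lemma intA:
  fixes a c :: real
  assumes "a < 1" "c > 0"
  shows "(\<integral>\<^sup>+x. ennreal (if \<bar>x\<bar> \<le> c then \<bar>x\<bar> powr (-a) else 0) \<partial>lborel) < \<infinity>"
proof -
  have hi: "((\<lambda>x. x powr (-a)) has_integral (c powr (-a+1)/(-a+1))) {0..c}"
    using has_integral_powr_from_0[of "-a" c] assms by auto
  define P where "P x = ennreal (x powr (-a)) * indicator {0..c} x" for x :: real
  have PI: "(\<integral>\<^sup>+x. P x \<partial>lborel) = ennreal (c powr (-a+1)/(-a+1))"
    unfolding P_def by (rule nn_integral_has_integral_lebesgue') (use hi in auto)
  have Pm: "P \<in> borel_measurable borel" unfolding P_def by measurable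
  have Pr: "(\<integral>\<^sup>+x. P (-x) \<partial>lborel) = (\<integral>\<^sup>+x. P x \<partial>lborel)"
    using nn_integral_real_affine[OF Pm, of "-1" 0] by simp
  have le: "ennreal (if \<bar>x\<bar> \<le> c then \<bar>x\<bar> powr (-a) else 0) \<le> P x + P (-x)" for x
  proof (cases "x \<ge> 0")
    case True thus ?thesis by (auto simp: P_def indicator_def)
  next
    case False thus ?thesis by (auto simp: P_def indicator_def)
  qed
  have "(\<integral>\<^sup>+x. ennreal (if \<bar>x\<bar> \<le> c then \<bar>x\<bar> powr (-a) else 0) \<partial>lborel) \<le> (\<integral>\<^sup>+x. P x + P (-x) \<partial>lborel)"
    by (rule nn_integral_mono) (use le in auto)
  also have "\<dots> = (\<integral>\<^sup>+x. P x \<partial>lborel) + (\<integral>\<^sup>+x. P (-x) \<partial>lborel)"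
    by (rule nn_integral_add) (use Pm in auto)
  also have "\<dots> < \<infinity>" using PI Pr by (simp add: )
  finally show ?thesis .
qed

lemma intB:
  fixes b c :: real
  assumes "b > 1" "c > 0"
  shows "(\<integral>\<^sup>+x. ennreal (if \<bar>x\<bar> > c then \<bar>x\<bar> powr (-b) else 0) \<partial>lborel) < \<infinity>"
proof -
  have hi: "((\<lambda>x. x powr (-b)) has_integral (-(c powr (-b+1))/(-b+1))) {c..}"
    using has_integral_powr_to_inf[of "-b" c] assms by auto
  define P where "P x = ennreal (x powr (-b)) * indicator {c..} x" for x :: real
  have PI: "(\<integral>\<^sup>+x. P x \<partial>lborel) = ennreal (-(c powr (-b+1))/(-b+1))"
    unfolding P_def by (rule nn_integral_has_integral_lebesgue') (use hi assms in auto)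
  have Pm: "P \<in> borel_measurable borel" unfolding P_def by measurable
  have Pr: "(\<integral>\<^sup>+x. P (-x) \<partial>lborel) = (\<integral>\<^sup>+x. P x \<partial>lborel)"
    using nn_integral_real_affine[OF Pm, of "-1" 0] by simp
  have le: "ennreal (if \<bar>x\<bar> > c then \<bar>x\<bar> powr (-b) else 0) \<le> P x + P (-x)" for x
  proof (cases "x \<ge> 0")
    case True thus ?thesis by (auto simp: P_def indicator_def)
  next
    case False thus ?thesis by (auto simp: P_def indicator_def)
  qed
  have "(\<integral>\<^sup>+x. ennreal (if \<bar>x\<bar> > c then \<bar>x\<bar> powr (-b) else 0) \<partial>lborel) \<le> (\<integral>\<^sup>+x. P x + P (-x) \<partial>lborel)"
    by (rule nn_integral_mono) (use le in auto)
  also have "\<dots> = (\<integral>\<^sup>+x. P x \<partial>lborel) + (\<integral>\<^sup>+x. P (-x) \<partial>lborel)"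
    by (rule nn_integral_add) (use Pm in auto)
  also have "\<dots> < \<infinity>" using PI Pr by simp
  finally show ?thesis .
qed

lemma Qf_meas[measurable]: "Qf a c \<in> borel_measurable borel"
  unfolding Qf_def by measurable
lemma Rf_meas[measurable]: "Rf a c \<in> borel_measurable borel"
  unfolding Rf_def by measurable

lemma Qf_int: assumes "a < 1" "c > 0" shows "integrable lborel (Qf a c)"
  using intA[OF assms] by (intro integrableI_bounded) (auto simp: Qf_def)
lemma Rf_int: assumes "b > 1" "c > 0" shows "integrable lborel (Rf b c)"
  using intB[OF assms] by (intro integrableI_bounded) (auto simp: Rf_def)

lemma Hf_int:
  assumes "\<sigma>*p < 1" "(\<sigma>+1)*p > 1"
  shows "integrable lborel (Hf \<sigma> p C)"
proof -
  have q: "integrable lborel (Qf (\<sigma>*p) 3)" using Qf_int assms by auto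
  have q1: "integrable lborel (\<lambda>t. Qf (\<sigma>*p) 3 (1+t))"
    using lborel_integrable_real_affine_iff[of 1 "Qf (\<sigma>*p) 3" 1] q by simp
  have r: "integrable lborel (Rf ((\<sigma>+1)*p) 2)" using Rf_int assms by auto
  show ?thesis unfolding Hf_def using q q1 r by (intro Bochner_Integration.integrable_add Bochner_Integration.integrable_mult_right) auto
qed

lemma Hf_nonneg: "C > 0 \<Longrightarrow> Hf \<sigma> p C t \<ge> 0"
  unfolding Hf_def Qf_def Rf_def by (intro add_nonneg_nonneg mult_nonneg_nonneg) auto

lemma Qf_nonneg: "Qf a c s \<ge> 0" by (simp add: Qf_def)
lemma Rf_nonneg: "Rf a c s \<ge> 0" by (simp add: Rf_def)

lemma powr_sum_le:
  fixes u v p :: real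
  assumes "0 \<le> u" "0 \<le> v" "0 < p"
  shows "(u+v) powr p \<le> 2 powr p * (u powr p + v powr p)"
proof -
  have *: "(u+v) powr p \<le> 2 powr p * w powr p" if "u \<le> w" "v \<le> w" for w
  proof -
    have "(u+v) powr p \<le> (2*w) powr p" using assms that by (intro powr_mono2) auto
    also have "\<dots> = 2 powr p * w powr p" using assms that by (simp add: powr_mult)
    finally show ?thesis .
  qed
  show ?thesis
  proof (cases "u \<le> v")
    case True
    then have "(u+v) powr p \<le> 2 powr p * v powr p" using * by auto
    also have "\<dots> \<le> 2 powr p * (u powr p + v powr p)" by (simp add: mult_left_mono)
    finally show ?thesis .
  next
    case False
    then have "(u+v) powr p \<le> 2 powr p * u powr p" using * by auto
    also have "\<dots> \<le> 2 powr p * (u powr p + v powr p)" by (simp add: mult_left_mono)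
    finally show ?thesis .
  qed
qed


lemma dpow: fixes u h a :: real assumes "h > 0" "u \<ge> 0"
  shows "h powr (-a) * (u / h) powr (-a) = u powr (-a)"
  using assms by (simp add: powr_divide powr_minus_divide)
lemma t85: fixes h C x s :: real
  shows "h * (C * (\<bar>x\<bar>/2) powr (-s-1)) = h * (C * 2 powr (s+1)) * \<bar>x\<bar> powr (-s-1)"
proof -
  have "(\<bar>x\<bar>/2) powr (-s-1) = \<bar>x\<bar> powr (-s-1) / 2 powr (-s-1)" by (simp add: powr_divide)
  also have "2 powr (-s-1) = 1 / 2 powr (s+1)" by (simp add: powr_minus_divide[symmetric])
  finally show ?thesis by simp
qed
lemma t89: fixes h K y s p :: real assumes "h > 0" "K > 0" "y \<ge> 0"
  shows "(h * K * y powr (-s-1)) powr p = K powr p * (h powr p * y powr (-((s+1)*p)))"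
proof -
  have "(h * K * y powr (-s-1)) powr p = h powr p * K powr p * (y powr (-s-1)) powr p"
    using assms by (simp add: powr_mult)
  also have "(y powr (-s-1)) powr p = y powr (-((s+1)*p))" proof - have e: "(-s-1)*p = -((s+1)*p)" by (simp add: algebra_simps) show ?thesis by (subst powr_powr) (simp only: e) qed
  finally show ?thesis by simp
qed
lemma t91: fixes h x s p :: real assumes "h > 0"
  shows "h powr p * \<bar>x\<bar> powr (-((s+1)*p)) = h powr (-(s*p)) * \<bar>x/h\<bar> powr (-((s+1)*p))"
proof -
  have "\<bar>x/h\<bar> powr (-((s+1)*p)) = \<bar>x\<bar> powr (-((s+1)*p)) * h powr ((s+1)*p)"
    using assms by (simp add: powr_divide powr_minus_divide)
  moreover have "h powr (-(s*p)) * h powr ((s+1)*p) = h powr p"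
    by (simp add: powr_add[symmetric] algebra_simps)
  ultimately show ?thesis by (simp add: algebra_simps)
qed
lemma cp: fixes C y s p :: real assumes "C > 0" "y \<ge> 0"
  shows "(C * y powr s) powr p = C powr p * y powr (s*p)"
  using assms by (simp add: powr_mult powr_powr)

lemma diff_bound:
  fixes f f' :: "real \<Rightarrow> complex" and p \<sigma> C h x :: real
  assumes p: "p > 0" and \<sigma>: "\<sigma> > 0" and C: "C > 0" and h: "h > 0"
  and der: "\<And>x. x \<noteq> 0 \<Longrightarrow> (f has_vector_derivative f' x) (at x)"
  and F1: "\<And>x. x \<noteq> 0 \<Longrightarrow> norm (f x) \<le> C * \<bar>x\<bar> powr (-\<sigma>)"
  and F2: "\<And>x. x \<noteq> 0 \<Longrightarrow> norm (f' x) \<le> C * \<bar>x\<bar> powr (-\<sigma>-1)"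
  and x: "x \<noteq> 0" "x + h \<noteq> 0"
  shows "norm (f (x+h) - f x) powr p \<le> h powr (-(\<sigma>*p)) * Hf \<sigma> p C (x/h)"
proof (cases "\<bar>x\<bar> \<le> 2*h")
  case True
  have "norm (f (x+h) - f x) \<le> norm (f (x+h)) + norm (f x)" by (rule norm_triangle_ineq4)
  also have "\<dots> \<le> C * \<bar>x+h\<bar> powr (-\<sigma>) + C * \<bar>x\<bar> powr (-\<sigma>)"
    using F1 x by (intro add_mono) auto
  finally have "norm (f (x+h) - f x) powr p \<le> (C * \<bar>x+h\<bar> powr (-\<sigma>) + C * \<bar>x\<bar> powr (-\<sigma>)) powr p"
    using p by (intro powr_mono2) auto
  also have "\<dots> \<le> 2 powr p * ((C * \<bar>x+h\<bar> powr (-\<sigma>)) powr p + (C * \<bar>x\<bar> powr (-\<sigma>)) powr p)"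
    using C p by (intro powr_sum_le) auto
  also have "\<dots> = 2 powr p * C powr p * \<bar>x+h\<bar> powr (-(\<sigma>*p)) + 2 powr p * C powr p * \<bar>x\<bar> powr (-(\<sigma>*p))"
    using C by (simp add: cp distrib_left)
  also have "\<dots> = h powr (-(\<sigma>*p)) * (2 powr p * C powr p * Qf (\<sigma>*p) 3 (1+x/h) + 2 powr p * C powr p * Qf (\<sigma>*p) 3 (x/h))"
  proof -
    have e1: "\<bar>1 + x/h\<bar> = \<bar>x+h\<bar> / h" using h by (simp add: field_simps)
    have e2: "\<bar>x/h\<bar> = \<bar>x\<bar> / h" using h by simp
    have l1: "\<bar>x+h\<bar> / h \<le> 3" using True h by (simp add: divide_simps)
    have l2: "\<bar>x\<bar> / h \<le> 3" using True h by (simp add: divide_simps)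
    have q1: "h powr (-(\<sigma>*p)) * Qf (\<sigma>*p) 3 (1+x/h) = \<bar>x+h\<bar> powr (-(\<sigma>*p))"
      unfolding Qf_def e1 using l1 dpow h by simp
    have q2: "h powr (-(\<sigma>*p)) * Qf (\<sigma>*p) 3 (x/h) = \<bar>x\<bar> powr (-(\<sigma>*p))"
      unfolding Qf_def e2 using l2 dpow h by simp
    show ?thesis by (simp add: distrib_left q1[symmetric] q2[symmetric] mult_ac)
  qed
  also have "\<dots> \<le> h powr (-(\<sigma>*p)) * Hf \<sigma> p C (x/h)"
    unfolding Hf_def by (intro mult_left_mono) (auto intro!: mult_nonneg_nonneg Rf_nonneg)
  finally show ?thesis .
next
  case False
  have nz: "y \<noteq> 0" if "y \<in> {x..x+h}" for y using False h that by auto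
  have cont: "continuous_on {x..x+h} f"
    by (rule continuous_on_vector_derivative) (rule has_vector_derivative_at_within[OF der[OF nz]])
  have der2: "(f has_derivative (\<lambda>t. t *\<^sub>R f' y)) (at y)" if "x < y" "y < x+h" for y
    using der[OF nz] that unfolding has_vector_derivative_def by auto
  obtain \<xi> where \<xi>: "\<xi> \<in> {x<..<x+h}" and
    mv: "norm (f (x+h) - f x) \<le> norm ((x + h - x) *\<^sub>R f' \<xi>)"
    using mvt_general[of x "x+h" f "\<lambda>\<xi> t. t *\<^sub>R f' \<xi>", OF _ cont der2] h by auto
  have xi: "\<bar>x\<bar>/2 \<le> \<bar>\<xi>\<bar>" using \<xi> False by auto
  have xipos: "\<xi> \<noteq> 0" using xi False h by auto
  have "norm (f (x+h) - f x) \<le> h * norm (f' \<xi>)" using mv h by simp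
  also have "\<dots> \<le> h * (C * \<bar>\<xi>\<bar> powr (-\<sigma>-1))"
    using F2[OF xipos] h by (intro mult_left_mono) auto
  also have "\<dots> \<le> h * (C * (\<bar>x\<bar>/2) powr (-\<sigma>-1))"
    using xi h C \<sigma> False by (intro mult_left_mono powr_mono2') auto
  also have "\<dots> = h * (C * 2 powr (\<sigma>+1)) * \<bar>x\<bar> powr (-\<sigma>-1)"
    by (rule t85)
  finally have "norm (f (x+h) - f x) powr p \<le> (h * (C * 2 powr (\<sigma>+1)) * \<bar>x\<bar> powr (-\<sigma>-1)) powr p"
    using p by (intro powr_mono2) auto
  also have "\<dots> = (C * 2 powr (\<sigma>+1)) powr p * (h powr p * \<bar>x\<bar> powr (-((\<sigma>+1)*p)))"
    using h C by (intro t89) auto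
  also have "h powr p * \<bar>x\<bar> powr (-((\<sigma>+1)*p)) = h powr (-(\<sigma>*p)) * \<bar>x/h\<bar> powr (-((\<sigma>+1)*p))"
    using h by (rule t91)
  also have "(C * 2 powr (\<sigma>+1)) powr p * (h powr (-(\<sigma>*p)) * \<bar>x/h\<bar> powr (-((\<sigma>+1)*p)))
     \<le> h powr (-(\<sigma>*p)) * Hf \<sigma> p C (x/h)"
  proof -
    have a1: "\<bar>x/h\<bar> = \<bar>x\<bar>/h" using h by simp
    have a2: "\<bar>x\<bar>/h > 2" using h False by (simp add: less_divide_eq)
    have r: "Rf ((\<sigma>+1)*p) 2 (x/h) = \<bar>x/h\<bar> powr (-((\<sigma>+1)*p))"
      unfolding Rf_def a1 using a2 by simp
    have "(C * 2 powr (\<sigma>+1)) powr p * \<bar>x/h\<bar> powr (-((\<sigma>+1)*p)) \<le> Hf \<sigma> p C (x/h)"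
      unfolding Hf_def r using Qf_nonneg[of "\<sigma>*p" 3]
      by (intro add_nonneg_nonneg[THEN le_add_same_cancel2[THEN iffD2]] mult_nonneg_nonneg) auto
    then have "h powr (-(\<sigma>*p)) * ((C * 2 powr (\<sigma>+1)) powr p * \<bar>x/h\<bar> powr (-((\<sigma>+1)*p))) \<le> h powr (-(\<sigma>*p)) * Hf \<sigma> p C (x/h)"
      by (intro mult_left_mono) auto
    then show ?thesis by (simp add: mult_ac)
  qed
  finally show ?thesis .
qed


lemma Dint:
  fixes f f' :: "real \<Rightarrow> complex" and p \<sigma> C h :: real
  assumes p: "p > 1" and \<sigma>: "\<sigma> > 0" "\<sigma> * p < 1" and C: "C > 0" and h: "h > 0"
  and der: "\<And>x. x \<noteq> 0 \<Longrightarrow> (f has_vector_derivative f' x) (at x)"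
  and F1: "\<And>x. x \<noteq> 0 \<Longrightarrow> norm (f x) \<le> C * \<bar>x\<bar> powr (-\<sigma>)"
  and F2: "\<And>x. x \<noteq> 0 \<Longrightarrow> norm (f' x) \<le> C * \<bar>x\<bar> powr (-\<sigma>-1)"
  and fm[measurable]: "f \<in> borel_measurable borel"
  shows "(LINT x|lebesgue. norm (f (x+h) - f x) powr p)
     \<le> h powr (1 - \<sigma>*p) * (LINT t|lborel. Hf \<sigma> p C t)"
proof -
  have b: "(\<sigma>+1)*p > 1" using p \<sigma> by (simp add: algebra_simps) (smt (verit) mult_pos_pos)
  have Hint: "integrable lborel (Hf \<sigma> p C)" using Hf_int[OF \<sigma>(2) b] .
  have Hnn: "\<And>t. Hf \<sigma> p C t \<ge> 0" using Hf_nonneg[OF C] .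
  have Hm[measurable]: "Hf \<sigma> p C \<in> borel_measurable borel"
    using Hint by (simp add: borel_measurable_integrable)
  define M where "M = (\<integral>\<^sup>+t. ennreal (Hf \<sigma> p C t) \<partial>lborel)"
  have MI: "M = ennreal (LINT t|lborel. Hf \<sigma> p C t)"
    unfolding M_def using Hint Hnn by (intro nn_integral_eq_integral) auto
  have Dm: "(\<lambda>x. norm (f (x+h) - f x) powr p) \<in> borel_measurable borel" by measurable
  have AE: "AE x in lborel. x \<notin> {0, -h}"
    by (rule AE_not_in) (simp add: finite_imp_null_set_lborel)
  have "(\<integral>\<^sup>+x. ennreal (norm (f (x+h) - f x) powr p) \<partial>lebesgue)
      = (\<integral>\<^sup>+x. ennreal (norm (f (x+h) - f x) powr p) \<partial>lborel)"
    by (rule nn_integral_completion)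
  also have "\<dots> \<le> (\<integral>\<^sup>+x. ennreal (h powr (-(\<sigma>*p)) * Hf \<sigma> p C (x/h)) \<partial>lborel)"
  proof (rule nn_integral_mono_AE)
    show "AE x in lborel. ennreal (norm (f (x+h) - f x) powr p) \<le> ennreal (h powr (-(\<sigma>*p)) * Hf \<sigma> p C (x/h))"
      using AE
    proof eventually_elim
      case (elim x)
      then have "x \<noteq> 0" "x + h \<noteq> 0" by auto
      then show ?case using diff_bound[of p \<sigma> C h f f' x] p \<sigma> C h der F1 F2
        by (intro ennreal_leI) auto
    qed
  qed
  also have "\<dots> = ennreal (h powr (-(\<sigma>*p))) * (\<integral>\<^sup>+x. ennreal (Hf \<sigma> p C (x/h)) \<partial>lborel)"
    by (subst nn_integral_cmult[symmetric]) (auto intro!: nn_integral_cong simp: ennreal_mult Hnn)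
  also have "(\<integral>\<^sup>+x. ennreal (Hf \<sigma> p C (x/h)) \<partial>lborel) = ennreal h * M"
    unfolding M_def using nn_integral_real_affine[of "\<lambda>x. ennreal (Hf \<sigma> p C (x/h))" h 0] h
    by simp
  also have "ennreal (h powr (-(\<sigma>*p))) * (ennreal h * M) = ennreal (h powr (1 - \<sigma>*p) * (LINT t|lborel. Hf \<sigma> p C t))"
  proof -
    have "h powr (1 - \<sigma>*p) = h powr (-(\<sigma>*p)) * h powr 1"
      by (subst powr_add[symmetric]) simp
    then have "h powr (-(\<sigma>*p)) * h = h powr (1 - \<sigma>*p)" using h by simp
    moreover have Inn: "(LINT t|lborel. Hf \<sigma> p C t) \<ge> 0" using Hnn by (intro Bochner_Integration.integral_nonneg) auto
    ultimately show ?thesis unfolding MI using h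
      by (simp add: ennreal_mult[symmetric] mult.assoc[symmetric])
  qed
  finally have le: "(\<integral>\<^sup>+x. ennreal (norm (f (x+h) - f x) powr p) \<partial>lebesgue) \<le> ennreal (h powr (1 - \<sigma>*p) * (LINT t|lborel. Hf \<sigma> p C t))" .
  have "(LINT x|lebesgue. norm (f (x+h) - f x) powr p)
     = enn2real (\<integral>\<^sup>+x. ennreal (norm (f (x+h) - f x) powr p) \<partial>lebesgue)"
    by (rule integral_eq_nn_integral) (use Dm in \<open>auto intro: measurable_completion\<close>)
  also have "\<dots> \<le> enn2real (ennreal (h powr (1 - \<sigma>*p) * (LINT t|lborel. Hf \<sigma> p C t)))"
    by (rule enn2real_mono[OF le]) simp
  also have "\<dots> = h powr (1 - \<sigma>*p) * (LINT t|lborel. Hf \<sigma> p C t)"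
    using Hnn by (intro enn2real_ennreal mult_nonneg_nonneg Bochner_Integration.integral_nonneg) auto
  finally show ?thesis .
qed


theorem lemma4p1:
  fixes f f' :: "real \<Rightarrow> complex" and p \<sigma> C \<delta> :: real
  assumes "p > 1" and "0 < \<sigma>" and "\<sigma> < 1 / p"
    and "C > 0" and "\<delta> > 1"
    and "\<And>x. x \<noteq> 0 \<Longrightarrow> (f has_vector_derivative f' x) (at x)"
    and "\<And>x. x \<noteq> 0 \<Longrightarrow> \<bar>x\<bar> \<le> 1 \<Longrightarrow> norm (f x) \<le> C * \<bar>x\<bar> powr (- \<sigma>)"
    and "\<And>x. \<bar>x\<bar> > 1 \<Longrightarrow> norm (f x) \<le> C * \<bar>x\<bar> powr (- \<delta>)"
    and "\<And>x. x \<noteq> 0 \<Longrightarrow> \<bar>x\<bar> \<le> 1 \<Longrightarrow> norm (f' x) \<le> C * \<bar>x\<bar> powr (- \<sigma> - 1)"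
    and "\<And>x. \<bar>x\<bar> > 1 \<Longrightarrow> norm (f' x) \<le> C * \<bar>x\<bar> powr (- \<delta> - 1)"
  shows "f \<in> Lip_class p (1 / p - \<sigma>)"
proof -
  have p0: "p > 0" using assms(1) by simp
  have sp: "\<sigma> * p < 1" using assms(1,3) by (simp add: less_divide_eq)
  have sd: "\<sigma> < \<delta>" using assms(1,3,5) by (smt (verit) divide_less_eq_1_pos)
  have C: "C > 0" using assms(4) .
  have F1: "norm (f x) \<le> C * \<bar>x\<bar> powr (-\<sigma>)" if x: "x \<noteq> 0" for x
  proof (cases "\<bar>x\<bar> \<le> 1")
    case True then show ?thesis using assms(7) x by auto
  next
    case False
    then have "norm (f x) \<le> C * \<bar>x\<bar> powr (-\<delta>)" using assms(8) by auto
    also have "\<dots> \<le> C * \<bar>x\<bar> powr (-\<sigma>)"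
      using False sd C by (intro mult_left_mono powr_mono) auto
    finally show ?thesis .
  qed
  have F2: "norm (f' x) \<le> C * \<bar>x\<bar> powr (-\<sigma>-1)" if x: "x \<noteq> 0" for x
  proof (cases "\<bar>x\<bar> \<le> 1")
    case True then show ?thesis using assms(9) x by auto
  next
    case False
    then have "norm (f' x) \<le> C * \<bar>x\<bar> powr (-\<delta>-1)" using assms(10) by auto
    also have "\<dots> \<le> C * \<bar>x\<bar> powr (-\<sigma>-1)"
      using False sd C by (intro mult_left_mono powr_mono) auto
    finally show ?thesis .
  qed
  have cont: "continuous_on (-{0}) f"
    by (rule continuous_on_vector_derivative) (auto intro: has_vector_derivative_at_within assms(6))
  have fm[measurable]: "f \<in> borel_measurable borel"
    by (rule borel_measurable_continuous_countable_exceptions[of "{0}"]) (use cont in auto)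
  have fmL: "f \<in> borel_measurable lebesgue"
    using fm by (intro measurable_completion) simp
  have AE0: "AE x in lborel. x \<notin> {0}"
    by (rule AE_not_in) (simp add: finite_imp_null_set_lborel)
  define G where "G x = C powr p * Qf (\<sigma>*p) 1 x + C powr p * Rf (\<delta>*p) 1 x" for x
  have Gint: "integrable lborel G"
  proof -
    have "integrable lborel (Qf (\<sigma>*p) 1)" using Qf_int sp by auto
    moreover have "integrable lborel (Rf (\<delta>*p) 1)" proof (rule Rf_int)
      show "1 < \<delta> * p" using assms(1,5) by (smt (verit) mult_less_cancel_left1)
    qed simp
    ultimately show ?thesis unfolding G_def
      by (intro Bochner_Integration.integrable_add Bochner_Integration.integrable_mult_right) auto
  qed
  have Gbound: "norm (f x) powr p \<le> G x" if x: "x \<noteq> 0" for x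
  proof (cases "\<bar>x\<bar> \<le> 1")
    case True
    have "norm (f x) powr p \<le> (C * \<bar>x\<bar> powr (-\<sigma>)) powr p"
      using assms(7)[OF x True] p0 by (intro powr_mono2) auto
    also have "\<dots> = C powr p * \<bar>x\<bar> powr (-(\<sigma>*p))" using C by (simp add: cp)
    also have "\<dots> \<le> G x" unfolding G_def Qf_def Rf_def using True C by simp
    finally show ?thesis .
  next
    case False
    have "norm (f x) powr p \<le> (C * \<bar>x\<bar> powr (-\<delta>)) powr p"
      using assms(8) False p0 by (intro powr_mono2) auto
    also have "\<dots> = C powr p * \<bar>x\<bar> powr (-(\<delta>*p))" using C by (simp add: cp)
    also have "\<dots> \<le> G x" unfolding G_def Qf_def Rf_def using False C by simp
    finally show ?thesis .
  qed
  have inLp: "in_Lp p f"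
    unfolding in_Lp_def
  proof
    show "f \<in> borel_measurable lebesgue" by (rule fmL)
    have "integrable lborel (\<lambda>x. norm (f x) powr p)"
    proof (rule Bochner_Integration.integrable_bound[OF Gint])
      show "(\<lambda>x. norm (f x) powr p) \<in> borel_measurable lborel" by measurable
      show "AE x in lborel. norm (norm (f x) powr p) \<le> norm (G x)"
        using AE0 by eventually_elim (use Gbound in \<open>force intro: order_trans[OF _ abs_ge_self]\<close>)
    qed
    then show "integrable lebesgue (\<lambda>x. norm (f x) powr p)"
      by (subst integrable_completion) auto
  qed
  define K where "K = (LINT t|lborel. Hf \<sigma> p C t)"
  define \<gamma> where "\<gamma> = 1 / p - \<sigma>"
  have \<gamma>: "\<gamma> > 0" using assms(3) unfolding \<gamma>_def by simp
  have K0: "K \<ge> 0" unfolding K_def using Hf_nonneg[OF C]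
    by (intro Bochner_Integration.integral_nonneg) auto
  have Lp: "Lp_norm p (\<lambda>x. f (x+h) - f x) \<le> K powr (1/p) * h powr \<gamma>" if h: "h > 0" for h
  proof -
    have I0: "(LINT x|lebesgue. norm (f (x+h) - f x) powr p) \<ge> 0"
      by (intro Bochner_Integration.integral_nonneg) auto
    have "Lp_norm p (\<lambda>x. f (x+h) - f x) = (LINT x|lebesgue. norm (f (x+h) - f x) powr p) powr (1/p)"
      unfolding Lp_norm_def ..
    also have "\<dots> \<le> (h powr (1 - \<sigma>*p) * K) powr (1/p)"
      using Dint[of p \<sigma> C h f f'] assms(1,2,6) sp C h F1 F2 fm I0 p0 unfolding K_def
      by (intro powr_mono2) auto
    also have "\<dots> = K powr (1/p) * h powr ((1 - \<sigma>*p) * (1/p))"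
      using h K0 by (simp add: powr_mult powr_powr)
    also have "(1 - \<sigma>*p) * (1/p) = \<gamma>" unfolding \<gamma>_def using p0 by (simp add: field_simps)
    finally show ?thesis .
  qed
  have Lpnn: "Lp_norm p (\<lambda>x. f (x+h) - f x) \<ge> 0" for h unfolding Lp_norm_def by simp
  have om: "0 \<le> omega_p p f d \<and> omega_p p f d \<le> K powr (1/p) * d powr \<gamma>" if d: "d > 0" for d
  proof -
    have b: "Lp_norm p (\<lambda>x. f (x+h) - f x) \<le> K powr (1/p) * d powr \<gamma>" if "h \<in> {0<..d}" for h
    proof -
      have "Lp_norm p (\<lambda>x. f (x+h) - f x) \<le> K powr (1/p) * h powr \<gamma>" using Lp that by auto
      also have "\<dots> \<le> K powr (1/p) * d powr \<gamma>"
        using that \<gamma> by (intro mult_left_mono powr_mono2) auto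
      finally show ?thesis .
    qed
    have ne: "{0<..d} \<noteq> {}" using d by auto
    have up: "omega_p p f d \<le> K powr (1/p) * d powr \<gamma>"
      unfolding omega_p_def by (rule cSUP_least[OF ne b])
    have bdd: "bdd_above ((\<lambda>h. Lp_norm p (\<lambda>x. f (x+h) - f x)) ` {0<..d})"
      using b by (intro bdd_aboveI2) auto
    have "Lp_norm p (\<lambda>x. f (x+d) - f x) \<le> omega_p p f d"
      unfolding omega_p_def by (rule cSUP_upper[OF _ bdd]) (use d in auto)
    with Lpnn[of d] up show ?thesis by linarith
  qed
  have "omega_p p f \<in> O[at_right 0](\<lambda>d. d powr \<gamma>)"
  proof (rule bigoI[where c = "K powr (1/p)"])
    show "\<forall>\<^sub>F d in at_right 0. norm (omega_p p f d) \<le> K powr (1/p) * norm (d powr \<gamma>)"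
      using eventually_at_right_less[of "0::real"]
    proof eventually_elim
      case (elim d) then show ?case using om[of d] by auto
    qed
  qed
  then show ?thesis unfolding Lip_class_def \<gamma>_def using inLp by auto
qed

end
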